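(* Let $t\ge 2$ and $N\ge (t+2)^2$. Let $\mathrm X_N=\{\bm x_1,\ldots,\bm x_N\}\subset\mathbb S^2$ be a stationary point set of $A_{N,t}$, and assume that the minimal singular value of the basis matrix $\mathbf Y_{t+1}(\mathrm X_N)\in\mathbb R^{(t+2)^2\times N}$ is positive, i.e. all $(t+2)^2$ singular values of $\mathbf Y_{t+1}(\mathrm X_N)$ are positive. Then $\mathrm X_N$ is a spherical $t$-design.
   Context: $\mathbb S^2=\{\bm x\in\mathbb R^3:\lVert \bm x\rVert_2=1\}$ with surface measure $d\omega$. $\Pi_t$ denotes the space of (restrictions to $\mathbb S^2$ of) polynomials on $\mathbb R^3$ of degree at most $t$. A finite set $\mathrm X_N=\{\bm x_1,\ldots,\bm x_N\}\subset\mathbb S^2$ is a spherical $t$-design if $\frac1N\sum_{i=1}^N p(\bm x_i)=\frac{1}{4\pi}\int_{\mathbb S^2}p\,d\omega$ for all $p\in\Pi_t$. Let $\{\mathrm Y_n^k: n=0,\ldots,t,\ k=1,\ldots,2n+1\}$ be a complete set of real spherical harmonics orthonormal in $L_2(\mathbb S^2)$ forming a basis of $\Pi_t$ ($\mathrm Y_n^k$ of degree $n$), with $\mathrm Y_0^1=1/\sqrt{4\pi}$. Define $$A_{N,t}(\mathrm X_N)=\frac{4\pi}{N^2}\sum_{n=1}^t\sum_{k=1}^{2n+1}\Big(\sum_{i=1}^N\mathrm Y_n^k(\bm x_i)\Big)^2=\frac{4\pi}{N^2}\sum_{j=1}^N\sum_{i=1}^N\sum_{n=1}^t\frac{2n+1}{4\pi}\mathrm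 P_n(\langle\bm x_j,\bm x_i\rangle),$$ where $\mathrm P_n$ is the Legendre polynomial of degree $n$, viewed as a function of $(\bm x_1,\ldots,\bm x_N)\in(\mathbb S^2)^N$. $\mathrm X_N$ is a stationary point set of $A_{N,t}$ if for each $i$ the spherical (surface) gradient of $A_{N,t}$ with respect to $\bm x_i\in\mathbb S^2$ (the other points held fixed) vanishes at $\mathrm X_N$. For a degree $s$, the basis matrix $\mathbf Y_s(\mathrm X_N)\in\mathbb R^{(s+1)^2\times N}$ has rows indexed by $(n,k)$, $0\le n\le s$, $1\le k\le 2n+1$, and columns indexed by $i=1,\ldots,N$, with entry $\mathrm Y_n^k(\bm x_i)$ (so the first row is $\frac{1}{\sqrt{4\pi}}(1,\ldots,1)$). *)

theory Defs
  imports "HOL-Analysis.Analysis" "Jordan_Normal_Form.Char_Poly" "HOL-Library.Discrete_Functions"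
begin

text \<open>Points of R^3 are triples (x1, x2, x3) :: real \<times> real \<times> real with the Euclidean
  inner product and norm; S^2 = {x. norm x = 1}.\<close>

type_synonym pt3 = "real \<times> real \<times> real"

definition poly3 :: "nat \<Rightarrow> (pt3 \<Rightarrow> real) \<Rightarrow> bool" where
  "poly3 d p \<longleftrightarrow> (\<exists>c :: nat \<Rightarrow> nat \<Rightarrow> nat \<Rightarrow> real. \<forall>x.
     p x = (\<Sum>a\<le>d. \<Sum>b\<le>d. \<Sum>e\<le>d. if a + b + e \<le> d
              then c a b e * fst x ^ a * fst (snd x) ^ b * snd (snd x) ^ e else 0))"

text \<open>Surface integral over S^2 with respect to the surface measure, via spherical coordinates.\<close>
definition sph :: "real \<Rightarrow> real \<Rightarrow> pt3" where
  "sph \<theta> \<phi> = (sin \<theta> * cos \<phi>, sin \<theta> * sin \<phi>, cos \<theta>)"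

definition sphere_integral :: "(pt3 \<Rightarrow> real) \<Rightarrow> real" where
  "sphere_integral f = integral (cbox (0, 0) (pi, 2 * pi)) (\<lambda>(\<theta>, \<phi>). f (sph \<theta> \<phi>) * sin \<theta>)"

definition sph_harm_basis :: "nat \<Rightarrow> (nat \<Rightarrow> nat \<Rightarrow> pt3 \<Rightarrow> real) \<Rightarrow> bool" where
  "sph_harm_basis s Y \<longleftrightarrow>
     (\<forall>n\<le>s. \<forall>k\<in>{1..2*n+1}. poly3 n (Y n k)) \<and>
     (\<forall>n\<le>s. \<forall>k\<in>{1..2*n+1}. \<forall>n'\<le>s. \<forall>k'\<in>{1..2*n'+1}.
        sphere_integral (\<lambda>x. Y n k x * Y n' k' x) = (if n = n' \<and> k = k' then 1 else 0)) \<and>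
     (\<forall>x. Y 0 1 x = 1 / sqrt (4 * pi)) \<and>
     (\<forall>m\<le>s. \<forall>p. poly3 m p \<longrightarrow> (\<exists>a :: nat \<Rightarrow> nat \<Rightarrow> real. \<forall>x. norm x = 1 \<longrightarrow>
        p x = (\<Sum>n\<le>m. \<Sum>k\<in>{1..2*n+1}. a n k * Y n k x)))"

definition spherical_design :: "nat \<Rightarrow> nat \<Rightarrow> (nat \<Rightarrow> pt3) \<Rightarrow> bool" where
  "spherical_design t N x \<longleftrightarrow> (\<forall>p. poly3 t p \<longrightarrow>
     (1 / real N) * (\<Sum>i<N. p (x i)) = (1 / (4 * pi)) * sphere_integral p)"

definition A_Nt :: "(nat \<Rightarrow> nat \<Rightarrow> pt3 \<Rightarrow> real) \<Rightarrow> nat \<Rightarrow> nat \<Rightarrow> (nat \<Rightarrow> pt3) \<Rightarrow> real" where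
  "A_Nt Y N t x = 4 * pi / (real N)^2 *
     (\<Sum>n\<in>{1..t}. \<Sum>k\<in>{1..2*n+1}. (\<Sum>i<N. Y n k (x i))^2)"

text \<open>Stationary point set: for each i the spherical gradient of A_{N,t} w.r.t. x_i
  (other points fixed) vanishes, i.e. the derivative of A along every differentiable
  curve on S^2 through x_i vanishes.\<close>
definition stationary_A :: "(nat \<Rightarrow> nat \<Rightarrow> pt3 \<Rightarrow> real) \<Rightarrow> nat \<Rightarrow> nat \<Rightarrow> (nat \<Rightarrow> pt3) \<Rightarrow> bool" where
  "stationary_A Y N t x \<longleftrightarrow> (\<forall>i<N. \<forall>\<gamma> :: real \<Rightarrow> pt3.
     (\<forall>s. norm (\<gamma> s) = 1) \<longrightarrow> \<gamma> 0 = x i \<longrightarrow> \<gamma> differentiable (at 0) \<longrightarrow>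
     ((\<lambda>s. A_Nt Y N t (x(i := \<gamma> s))) has_real_derivative 0) (at 0))"

text \<open>Basis matrix Y_s(X_N), (s+1)^2 \<times> N; row r = n^2 + k - 1 corresponds to (n,k).\<close>
definition basis_matrix :: "(nat \<Rightarrow> nat \<Rightarrow> pt3 \<Rightarrow> real) \<Rightarrow> nat \<Rightarrow> nat \<Rightarrow> (nat \<Rightarrow> pt3) \<Rightarrow> real mat" where
  "basis_matrix Y s N x = mat ((s + 1)^2) N
     (\<lambda>(r, i). Y (floor_sqrt r) (r - (floor_sqrt r)^2 + 1) (x i))"

text \<open>Singular values of an m \<times> n matrix M with m \<le> n: the square roots of the m
  eigenvalues of M M^T.\<close>
definition singular_value :: "real mat \<Rightarrow> real \<Rightarrow> bool" where
  "singular_value M \<sigma> \<longleftrightarrow> \<sigma> \<ge> 0 \<and> eigenvalue (M * transpose_mat M) (\<sigma>^2)"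

end

theory Submission
  imports Defs
begin


definition tri :: "nat \<Rightarrow> (nat\<Rightarrow>nat\<Rightarrow>nat\<Rightarrow>real) \<Rightarrow> pt3 \<Rightarrow> real" where
 "tri D c x = (\<Sum>a\<le>D. \<Sum>b\<le>D. \<Sum>e\<le>D. c a b e * fst x ^ a * fst (snd x) ^ b * snd (snd x) ^ e)"

definition pp :: "nat \<Rightarrow> nat \<Rightarrow> (pt3\<Rightarrow>real) \<Rightarrow> bool" where
 "pp d D p \<longleftrightarrow> (\<exists>c. (\<forall>a b e. d < a+b+e \<longrightarrow> c a b e = 0) \<and> (\<forall>x. p x = tri D c x))"

lemma sum_atMost_extend:
  fixes f :: "nat \<Rightarrow> real"
  assumes "d \<le> D" "\<And>a. d < a \<Longrightarrow> f a = 0"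
  shows "(\<Sum>a\<le>D. f a) = (\<Sum>a\<le>d. f a)"
  using assms by (intro sum.mono_neutral_right) auto

lemma tri_extend:
  assumes "\<forall>a b e. d < a+b+e \<longrightarrow> c a b e = 0" "d \<le> D"
  shows "tri D c x = tri d c x"
proof -
  have "tri D c x = (\<Sum>a\<le>d. \<Sum>b\<le>D. \<Sum>e\<le>D. c a b e * fst x ^ a * fst (snd x) ^ b * snd (snd x) ^ e)"
    unfolding tri_def using assms by (intro sum_atMost_extend) auto
  also have "\<dots> = (\<Sum>a\<le>d. \<Sum>b\<le>d. \<Sum>e\<le>D. c a b e * fst x ^ a * fst (snd x) ^ b * snd (snd x) ^ e)"
    using assms by (intro sum.cong refl sum_atMost_extend) auto
  also have "\<dots> = tri d c x"
    unfolding tri_def using assms by (intro sum.cong refl sum_atMost_extend) auto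
  finally show ?thesis .
qed

lemma poly3_pp: assumes "d \<le> D" shows "poly3 d p \<longleftrightarrow> pp d D p"
proof
  assume "poly3 d p"
  then obtain c where c: "\<forall>x. p x = (\<Sum>a\<le>d. \<Sum>b\<le>d. \<Sum>e\<le>d. if a + b + e \<le> d
              then c a b e * fst x ^ a * fst (snd x) ^ b * snd (snd x) ^ e else 0)"
    unfolding poly3_def by blast
  define c' where "c' a b e = (if a+b+e \<le> d then c a b e else 0)" for a b e
  have v: "\<forall>a b e. d < a+b+e \<longrightarrow> c' a b e = 0" by (auto simp: c'_def)
  have "p x = tri D c' x" for x
  proof -
    have "p x = tri d c' x"
      unfolding c[THEN spec, of x] tri_def c'_def by (intro sum.cong refl) auto
    then show ?thesis using tri_extend[OF v assms] by simp
  qed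
  with v show "pp d D p" unfolding pp_def by blast
next
  assume "pp d D p"
  then obtain c where v: "\<forall>a b e. d < a+b+e \<longrightarrow> c a b e = 0" and c: "\<forall>x. p x = tri D c x"
    unfolding pp_def by blast
  have "p x = (\<Sum>a\<le>d. \<Sum>b\<le>d. \<Sum>e\<le>d. if a + b + e \<le> d
              then c a b e * fst x ^ a * fst (snd x) ^ b * snd (snd x) ^ e else 0)" for x
  proof -
    have "p x = tri d c x" using c[THEN spec, of x] tri_extend[OF v assms] by simp
    also have "\<dots> = (\<Sum>a\<le>d. \<Sum>b\<le>d. \<Sum>e\<le>d. if a + b + e \<le> d
              then c a b e * fst x ^ a * fst (snd x) ^ b * snd (snd x) ^ e else 0)"
      unfolding tri_def using v by (intro sum.cong refl) auto
    finally show ?thesis .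
  qed
  then show "poly3 d p" unfolding poly3_def by blast
qed

lemma pp_mono: "pp d D p \<Longrightarrow> d \<le> d' \<Longrightarrow> pp d' D p"
  unfolding pp_def by (meson order_le_less_trans)

lemma tri_add: "tri D (\<lambda>a b e. c1 a b e + c2 a b e) x = tri D c1 x + tri D c2 x"
  unfolding tri_def by (simp add: algebra_simps sum.distrib)

lemma tri_scale: "tri D (\<lambda>a b e. k * c a b e) x = k * tri D c x"
  unfolding tri_def by (simp add: algebra_simps sum_distrib_left)

lemma pp_add: "pp d D p \<Longrightarrow> pp d D q \<Longrightarrow> pp d D (\<lambda>x. p x + q x)"
  unfolding pp_def
proof (elim exE conjE)
  fix c1 c2 assume "\<forall>a b e. d < a+b+e \<longrightarrow> c1 a b e = 0" "\<forall>x. p x = tri D c1 x"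
    "\<forall>a b e. d < a+b+e \<longrightarrow> c2 a b e = 0" "\<forall>x. q x = tri D c2 x"
  then show "\<exists>c. (\<forall>a b e. d < a+b+e \<longrightarrow> c a b e = 0) \<and> (\<forall>x. p x + q x = tri D c x)"
    by (intro exI[of _ "\<lambda>a b e. c1 a b e + c2 a b e"]) (simp add: tri_add)
qed

lemma pp_scale: "pp d D p \<Longrightarrow> pp d D (\<lambda>x. k * p x)"
  unfolding pp_def
proof (elim exE conjE)
  fix c1 assume "\<forall>a b e. d < a+b+e \<longrightarrow> c1 a b e = 0" "\<forall>x. p x = tri D c1 x"
  then show "\<exists>c. (\<forall>a b e. d < a+b+e \<longrightarrow> c a b e = 0) \<and> (\<forall>x. k * p x = tri D c x)"
    by (intro exI[of _ "\<lambda>a b e. k * c1 a b e"]) (simp add: tri_scale)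
qed

lemma pp_diff: "pp d D p \<Longrightarrow> pp d D q \<Longrightarrow> pp d D (\<lambda>x. p x - q x)"
  using pp_add[of d D p "\<lambda>x. (-1) * q x"] pp_scale[of d D q "-1"] by simp

lemma pp_zero: "pp d D (\<lambda>x. 0)"
  unfolding pp_def by (intro exI[of _ "\<lambda>a b e. 0"]) (simp add: tri_def)

lemma pp_sum: "finite S \<Longrightarrow> (\<And>s. s \<in> S \<Longrightarrow> pp d D (f s)) \<Longrightarrow> pp d D (\<lambda>x. \<Sum>s\<in>S. w s * f s x)"
proof (induction S rule: finite_induct)
  case empty then show ?case by (simp add: pp_zero)
next
  case (insert s S)
  then show ?case using pp_add[OF pp_scale[of d D "f s" "w s"]] by simp
qed

lemma shift_mult:
  fixes f :: "nat \<Rightarrow> real"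
  assumes "f D = 0"
  shows "u * (\<Sum>a\<le>D. f a * u^a) = (\<Sum>a\<le>D. (if a = 0 then 0 else f (a - 1)) * u^a)"
proof (cases D)
  case 0 then show ?thesis using assms by simp
next
  case (Suc D')
  have "(\<Sum>a\<le>D. (if a = 0 then 0 else f (a - 1)) * u^a) = (\<Sum>a\<le>D'. f a * u^(Suc a))"
    unfolding Suc sum.atMost_Suc_shift by simp
  also have "\<dots> = u * (\<Sum>a\<le>D. f a * u^a)"
    unfolding Suc sum.atMost_Suc using assms Suc by (simp add: sum_distrib_left algebra_simps)
  finally show ?thesis by simp
qed

lemma shift_deriv:
  fixes f :: "nat \<Rightarrow> real"
  assumes "f (Suc D) = 0"
  shows "(\<Sum>a\<le>D. of_nat a * f a * u^(a-1)) = (\<Sum>a\<le>D. of_nat (Suc a) * f (Suc a) * u^a)"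
proof (cases D)
  case 0 then show ?thesis using assms by simp
next
  case (Suc D')
  have "(\<Sum>a\<le>D. of_nat a * f a * u^(a-1)) = (\<Sum>a\<le>D'. of_nat (Suc a) * f (Suc a) * u^a)"
    unfolding Suc sum.atMost_Suc_shift by simp
  also have "\<dots> = (\<Sum>a\<le>D. of_nat (Suc a) * f (Suc a) * u^a)"
    unfolding Suc sum.atMost_Suc using assms Suc by simp
  finally show ?thesis .
qed




lemma tri_form1: "tri D c x = (\<Sum>a\<le>D. (\<Sum>b\<le>D. \<Sum>e\<le>D. c a b e * fst (snd x)^b * snd(snd x)^e) * fst x ^ a)"
  unfolding tri_def by (simp add: sum_distrib_right sum_distrib_left algebra_simps)

lemma tri_form2: "tri D c x = (\<Sum>a\<le>D. fst x^a * (\<Sum>b\<le>D. (\<Sum>e\<le>D. c a b e * snd(snd x)^e) * fst (snd x)^b))"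
  unfolding tri_def by (simp add: sum_distrib_right sum_distrib_left algebra_simps)

lemma tri_form3: "tri D c x = (\<Sum>a\<le>D. \<Sum>b\<le>D. fst x^a * fst(snd x)^b * (\<Sum>e\<le>D. c a b e * snd(snd x)^e))"
  unfolding tri_def by (simp add: sum_distrib_right sum_distrib_left algebra_simps)

lemma pp_mult1: assumes "pp d D p" "d < D" shows "pp (Suc d) D (\<lambda>x. fst x * p x)"
proof -
  obtain c where v: "\<forall>a b e. d < a+b+e \<longrightarrow> c a b e = 0" and c: "\<forall>x. p x = tri D c x"
    using assms unfolding pp_def by blast
  define c' where "c' a b e = (if a = 0 then 0 else c (a-1) b e)" for a b e
  have v': "\<forall>a b e. Suc d < a+b+e \<longrightarrow> c' a b e = 0" using v by (auto simp: c'_def)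
  have "fst x * p x = tri D c' x" for x
  proof -
    have z: "(\<Sum>b\<le>D. \<Sum>e\<le>D. c D b e * fst (snd x)^b * snd(snd x)^e) = 0"
      using v assms(2) by simp
    show ?thesis
      unfolding c[THEN spec, of x] tri_form1 shift_mult[of "\<lambda>a. (\<Sum>b\<le>D. \<Sum>e\<le>D. c a b e * fst (snd x)^b * snd(snd x)^e)", OF z]
      by (intro sum.cong refl) (simp add: c'_def)
  qed
  with v' show ?thesis unfolding pp_def by blast
qed

lemma pp_mult2: assumes "pp d D p" "d < D" shows "pp (Suc d) D (\<lambda>x. fst (snd x) * p x)"
proof -
  obtain c where v: "\<forall>a b e. d < a+b+e \<longrightarrow> c a b e = 0" and c: "\<forall>x. p x = tri D c x"
    using assms unfolding pp_def by blast
  define c' where "c' a b e = (if b = 0 then 0 else c a (b-1) e)" for a b e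
  have v': "\<forall>a b e. Suc d < a+b+e \<longrightarrow> c' a b e = 0" using v by (auto simp: c'_def)
  have "fst (snd x) * p x = tri D c' x" for x
  proof -
    have "fst (snd x) * p x = (\<Sum>a\<le>D. fst x^a * (fst (snd x) * (\<Sum>b\<le>D. (\<Sum>e\<le>D. c a b e * snd(snd x)^e) * fst (snd x)^b)))"
      unfolding c[THEN spec, of x] tri_form2 by (simp add: sum_distrib_left algebra_simps)
    also have "\<dots> = tri D c' x"
      unfolding tri_form2
    proof (intro sum.cong refl arg_cong2[where f="(*)"])
      fix a assume "a \<in> {..D}"
      have z: "(\<Sum>e\<le>D. c a D e * snd(snd x)^e) = 0"
        using v assms(2) by simp
      show "fst (snd x) * (\<Sum>b\<le>D. (\<Sum>e\<le>D. c a b e * snd(snd x)^e) * fst (snd x)^b) =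
        (\<Sum>b\<le>D. (\<Sum>e\<le>D. c' a b e * snd(snd x)^e) * fst (snd x)^b)"
        unfolding shift_mult[of "\<lambda>b. (\<Sum>e\<le>D. c a b e * snd(snd x)^e)", OF z] by (intro sum.cong refl) (simp add: c'_def)
    qed
    finally show ?thesis .
  qed
  with v' show ?thesis unfolding pp_def by blast
qed

lemma pp_mult3: assumes "pp d D p" "d < D" shows "pp (Suc d) D (\<lambda>x. snd (snd x) * p x)"
proof -
  obtain c where v: "\<forall>a b e. d < a+b+e \<longrightarrow> c a b e = 0" and c: "\<forall>x. p x = tri D c x"
    using assms unfolding pp_def by blast
  define c' where "c' a b e = (if e = 0 then 0 else c a b (e-1))" for a b e
  have v': "\<forall>a b e. Suc d < a+b+e \<longrightarrow> c' a b e = 0" using v by (auto simp: c'_def)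
  have "snd (snd x) * p x = tri D c' x" for x
  proof -
    have "snd (snd x) * p x = (\<Sum>a\<le>D. \<Sum>b\<le>D. fst x^a * fst(snd x)^b * (snd (snd x) * (\<Sum>e\<le>D. c a b e * snd(snd x)^e)))"
      unfolding c[THEN spec, of x] tri_form3 by (simp add: sum_distrib_left algebra_simps)
    also have "\<dots> = tri D c' x"
      unfolding tri_form3
    proof (intro sum.cong refl arg_cong2[where f="(*)"])
      fix a b assume "a \<in> {..D}" "b \<in> {..D}"
      have z: "c a b D = 0"
        using v assms(2) by simp
      show "snd (snd x) * (\<Sum>e\<le>D. c a b e * snd(snd x)^e) = (\<Sum>e\<le>D. c' a b e * snd(snd x)^e)"
        unfolding shift_mult[of "c a b", OF z] by (intro sum.cong refl) (simp add: c'_def)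
    qed
    finally show ?thesis .
  qed
  with v' show ?thesis unfolding pp_def by blast
qed




definition sh1 where "sh1 c a b e = of_nat (Suc a) * c (Suc a) b e"
definition sh2 where "sh2 c a b e = of_nat (Suc b) * c a (Suc b) e"
definition sh3 where "sh3 c a b e = of_nat (Suc e) * c a b (Suc e)"

definition dtri :: "nat \<Rightarrow> (nat\<Rightarrow>nat\<Rightarrow>nat\<Rightarrow>real) \<Rightarrow> pt3 \<Rightarrow> pt3 \<Rightarrow> real" where
  "dtri D c x h = fst h * tri D (sh1 c) x + fst (snd h) * tri D (sh2 c) x + snd (snd h) * tri D (sh3 c) x"

lemma mono_deriv:
  "((\<lambda>x::pt3. fst x ^ a * fst (snd x) ^ b * snd (snd x) ^ e) has_derivative
     (\<lambda>h. fst h * (of_nat a * fst x^(a-1) * fst(snd x)^b * snd(snd x)^e)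
        + fst(snd h) * (of_nat b * fst x^a * fst(snd x)^(b-1) * snd(snd x)^e)
        + snd(snd h) * (of_nat e * fst x^a * fst(snd x)^b * snd(snd x)^(e-1)))) (at x)"
  by (auto intro!: derivative_eq_intros simp: algebra_simps)

lemma d1: assumes "\<forall>b e. c (Suc D) b e = 0"
  shows "(\<Sum>a\<le>D. \<Sum>b\<le>D. \<Sum>e\<le>D. c a b e * (of_nat a * fst x^(a-1) * fst(snd x)^b * snd(snd x)^e))
    = tri D (sh1 c) x"
proof -
  have z: "(\<Sum>b\<le>D. \<Sum>e\<le>D. c (Suc D) b e * fst (snd x)^b * snd(snd x)^e) = 0" using assms by simp
  have "(\<Sum>a\<le>D. \<Sum>b\<le>D. \<Sum>e\<le>D. c a b e * (of_nat a * fst x^(a-1) * fst(snd x)^b * snd(snd x)^e))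
     = (\<Sum>a\<le>D. of_nat a * (\<Sum>b\<le>D. \<Sum>e\<le>D. c a b e * fst (snd x)^b * snd(snd x)^e) * fst x^(a-1))"
    by (simp add: sum_distrib_left sum_distrib_right algebra_simps)
  also have "\<dots> = (\<Sum>a\<le>D. of_nat (Suc a) * (\<Sum>b\<le>D. \<Sum>e\<le>D. c (Suc a) b e * fst (snd x)^b * snd(snd x)^e) * fst x^a)"
    by (rule shift_deriv[of "\<lambda>a. (\<Sum>b\<le>D. \<Sum>e\<le>D. c a b e * fst (snd x)^b * snd(snd x)^e)", OF z])
  also have "\<dots> = tri D (sh1 c) x"
    unfolding tri_def sh1_def by (simp add: sum_distrib_left sum_distrib_right algebra_simps)
  finally show ?thesis .
qed

lemma d2: assumes "\<forall>a e. c a (Suc D) e = 0"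
  shows "(\<Sum>a\<le>D. \<Sum>b\<le>D. \<Sum>e\<le>D. c a b e * (of_nat b * fst x^a * fst(snd x)^(b-1) * snd(snd x)^e))
    = tri D (sh2 c) x"
proof -
  have "(\<Sum>a\<le>D. \<Sum>b\<le>D. \<Sum>e\<le>D. c a b e * (of_nat b * fst x^a * fst(snd x)^(b-1) * snd(snd x)^e))
     = (\<Sum>a\<le>D. fst x^a * (\<Sum>b\<le>D. of_nat b * (\<Sum>e\<le>D. c a b e * snd(snd x)^e) * fst (snd x)^(b-1)))"
    by (simp add: sum_distrib_left sum_distrib_right algebra_simps)
  also have "\<dots> = (\<Sum>a\<le>D. fst x^a * (\<Sum>b\<le>D. of_nat (Suc b) * (\<Sum>e\<le>D. c a (Suc b) e * snd(snd x)^e) * fst (snd x)^b))"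
  proof (rule sum.cong[OF refl], rule arg_cong2[where f="(*)"], rule refl)
    fix a assume "a \<in> {..D}"
    have z: "(\<Sum>e\<le>D. c a (Suc D) e * snd(snd x)^e) = 0" using assms by simp
    show "(\<Sum>b\<le>D. of_nat b * (\<Sum>e\<le>D. c a b e * snd(snd x)^e) * fst (snd x)^(b-1)) = (\<Sum>b\<le>D. of_nat (Suc b) * (\<Sum>e\<le>D. c a (Suc b) e * snd(snd x)^e) * fst (snd x)^b)"
      by (rule shift_deriv[of "\<lambda>b. (\<Sum>e\<le>D. c a b e * snd(snd x)^e)", OF z])
  qed
  also have "\<dots> = tri D (sh2 c) x"
    unfolding tri_def sh2_def by (simp add: sum_distrib_left sum_distrib_right algebra_simps)
  finally show ?thesis .
qed

lemma d3: assumes "\<forall>a b. c a b (Suc D) = 0"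
  shows "(\<Sum>a\<le>D. \<Sum>b\<le>D. \<Sum>e\<le>D. c a b e * (of_nat e * fst x^a * fst(snd x)^b * snd(snd x)^(e-1)))
    = tri D (sh3 c) x"
proof -
  have "(\<Sum>a\<le>D. \<Sum>b\<le>D. \<Sum>e\<le>D. c a b e * (of_nat e * fst x^a * fst(snd x)^b * snd(snd x)^(e-1)))
     = (\<Sum>a\<le>D. \<Sum>b\<le>D. fst x^a * fst (snd x)^b * (\<Sum>e\<le>D. of_nat e * c a b e * snd(snd x)^(e-1)))"
    by (simp add: sum_distrib_left sum_distrib_right algebra_simps)
  also have "\<dots> = (\<Sum>a\<le>D. \<Sum>b\<le>D. fst x^a * fst (snd x)^b * (\<Sum>e\<le>D. of_nat (Suc e) * c a b (Suc e) * snd(snd x)^e))"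
  proof (rule sum.cong[OF refl], rule sum.cong[OF refl], rule arg_cong2[where f="(*)"], rule refl)
    fix a b assume "a \<in> {..D}" "b \<in> {..D}"
    have z: "c a b (Suc D) = 0" using assms by simp
    show "(\<Sum>e\<le>D. of_nat e * c a b e * snd(snd x)^(e-1)) = (\<Sum>e\<le>D. of_nat (Suc e) * c a b (Suc e) * snd(snd x)^e)"
      by (rule shift_deriv[of "c a b", OF z])
  qed
  also have "\<dots> = tri D (sh3 c) x"
    unfolding tri_def sh3_def by (simp add: sum_distrib_left sum_distrib_right algebra_simps)
  finally show ?thesis .
qed

lemma tri_deriv:
  assumes "\<forall>a b e. d < a+b+e \<longrightarrow> c a b e = 0" "d \<le> D"
  shows "(tri D c has_derivative dtri D c x) (at x)"
proof -
  have h: "((\<lambda>x. \<Sum>a\<le>D. \<Sum>b\<le>D. \<Sum>e\<le>D. c a b e * (fst x ^ a * fst (snd x) ^ b * snd (snd x) ^ e)) has_derivative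
     (\<lambda>h. \<Sum>a\<le>D. \<Sum>b\<le>D. \<Sum>e\<le>D. c a b e * (fst h * (of_nat a * fst x^(a-1) * fst(snd x)^b * snd(snd x)^e)
        + fst(snd h) * (of_nat b * fst x^a * fst(snd x)^(b-1) * snd(snd x)^e)
        + snd(snd h) * (of_nat e * fst x^a * fst(snd x)^b * snd(snd x)^(e-1))))) (at x)"
    by (intro has_derivative_sum has_derivative_mult_right mono_deriv)
  have e1: "tri D c = (\<lambda>x. \<Sum>a\<le>D. \<Sum>b\<le>D. \<Sum>e\<le>D. c a b e * (fst x ^ a * fst (snd x) ^ b * snd (snd x) ^ e))"
    unfolding tri_def by (simp add: algebra_simps)
  have e2: "(\<lambda>h. \<Sum>a\<le>D. \<Sum>b\<le>D. \<Sum>e\<le>D. c a b e * (fst h * (of_nat a * fst x^(a-1) * fst(snd x)^b * snd(snd x)^e)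
        + fst(snd h) * (of_nat b * fst x^a * fst(snd x)^(b-1) * snd(snd x)^e)
        + snd(snd h) * (of_nat e * fst x^a * fst(snd x)^b * snd(snd x)^(e-1)))) = dtri D c x"
  proof
    fix h :: pt3
    have "(\<Sum>a\<le>D. \<Sum>b\<le>D. \<Sum>e\<le>D. c a b e * (fst h * (of_nat a * fst x^(a-1) * fst(snd x)^b * snd(snd x)^e)
        + fst(snd h) * (of_nat b * fst x^a * fst(snd x)^(b-1) * snd(snd x)^e)
        + snd(snd h) * (of_nat e * fst x^a * fst(snd x)^b * snd(snd x)^(e-1))))
      = fst h * (\<Sum>a\<le>D. \<Sum>b\<le>D. \<Sum>e\<le>D. c a b e * (of_nat a * fst x^(a-1) * fst(snd x)^b * snd(snd x)^e))
      + fst (snd h) * (\<Sum>a\<le>D. \<Sum>b\<le>D. \<Sum>e\<le>D. c a b e * (of_nat b * fst x^a * fst(snd x)^(b-1) * snd(snd x)^e))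
      + snd (snd h) * (\<Sum>a\<le>D. \<Sum>b\<le>D. \<Sum>e\<le>D. c a b e * (of_nat e * fst x^a * fst(snd x)^b * snd(snd x)^(e-1)))"
      by (simp add: sum_distrib_left sum.distrib algebra_simps)
    also have "\<dots> = dtri D c x h"
    proof -
      have h1: "\<forall>b e. c (Suc D) b e = 0" and h2: "\<forall>a e. c a (Suc D) e = 0" and h3: "\<forall>a b. c a b (Suc D) = 0"
        using assms by auto
      show ?thesis unfolding dtri_def d1[of c D x, OF h1] d2[of c D x, OF h2] d3[of c D x, OF h3] ..
    qed
    finally show "(\<Sum>a\<le>D. \<Sum>b\<le>D. \<Sum>e\<le>D. c a b e * (fst h * (of_nat a * fst x^(a-1) * fst(snd x)^b * snd(snd x)^e)
        + fst(snd h) * (of_nat b * fst x^a * fst(snd x)^(b-1) * snd(snd x)^e)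
        + snd(snd h) * (of_nat e * fst x^a * fst(snd x)^b * snd(snd x)^(e-1)))) = dtri D c x h" .
  qed
  show ?thesis using h unfolding e1 e2 .
qed

lemma sh_vanish:
  assumes "\<forall>a b e. d < a+b+e \<longrightarrow> c a b e = 0"
  shows "\<forall>a b e. d - 1 < a+b+e \<longrightarrow> sh1 c a b e = 0"
    "\<forall>a b e. d - 1 < a+b+e \<longrightarrow> sh2 c a b e = 0"
    "\<forall>a b e. d - 1 < a+b+e \<longrightarrow> sh3 c a b e = 0"
  using assms by (auto simp: sh1_def sh2_def sh3_def)




lemma fs_idx: assumes "1 \<le> k" "k \<le> 2*n+1"
  shows "floor_sqrt (n^2 + k - 1) = n" "n^2 + k - 1 - (floor_sqrt (n^2+k-1))^2 + 1 = k"
proof -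
  show *: "floor_sqrt (n^2 + k - 1) = n"
    using assms by (intro floor_sqrt_unique) (auto simp: power2_eq_square)
  show "n^2 + k - 1 - (floor_sqrt (n^2+k-1))^2 + 1 = k" unfolding * using assms by simp
qed

lemma reindex_rows:
  "(\<Sum>r<(s+1)^2. f (floor_sqrt r) (r - (floor_sqrt r)^2 + 1)) = (\<Sum>n\<le>s. \<Sum>k\<in>{1..2*n+1}. f n k)"
proof (induction s)
  case 0 then show ?case by simp
next
  case (Suc s)
  have split: "{..<(Suc s+1)^2} = {..<(s+1)^2} \<union> {(s+1)^2..<(s+1)^2 + (2*(s+1)+1)}"
    by (auto simp: power2_eq_square)
  have last: "(\<Sum>r\<in>{(s+1)^2..<(s+1)^2 + (2*(s+1)+1)}. f (floor_sqrt r) (r - (floor_sqrt r)^2 + 1))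
      = (\<Sum>k\<in>{1..2*(Suc s)+1}. f (Suc s) k)"
  proof (rule sum.reindex_bij_witness[of _ "\<lambda>k. k - 1 + (s+1)^2" "\<lambda>r. r - (s+1)^2 + 1"])
    fix r assume r: "r \<in> {(s+1)^2..<(s+1)^2 + (2*(s+1)+1)}"
    then have "floor_sqrt r = s+1"
      by (intro floor_sqrt_unique) (auto simp: power2_eq_square)
    then show "f (Suc s) (r - (s + 1)\<^sup>2 + 1) = f (floor_sqrt r) (r - (floor_sqrt r)\<^sup>2 + 1)" by simp
  qed auto
  have "(\<Sum>r<(Suc s+1)^2. f (floor_sqrt r) (r - (floor_sqrt r)^2 + 1)) =
    (\<Sum>r<(s+1)^2. f (floor_sqrt r) (r - (floor_sqrt r)^2 + 1)) + (\<Sum>r\<in>{(s+1)^2..<(s+1)^2 + (2*(s+1)+1)}. f (floor_sqrt r) (r - (floor_sqrt r)^2 + 1))"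
    unfolding split by (rule sum.union_disjoint) auto
  then show ?case by (simp only: Suc.IH last sum.atMost_Suc)
qed

lemma matrix_kernel:
  fixes Y :: "nat \<Rightarrow> nat \<Rightarrow> pt3 \<Rightarrow> real" and a :: "nat \<Rightarrow> nat \<Rightarrow> real"
  assumes sv: "\<forall>\<sigma>. singular_value (basis_matrix Y s N x) \<sigma> \<longrightarrow> \<sigma> > 0"
    and z: "\<forall>i<N. (\<Sum>n\<le>s. \<Sum>k\<in>{1..2*n+1}. a n k * Y n k (x i)) = 0"
  shows "\<forall>n\<le>s. \<forall>k\<in>{1..2*n+1}. a n k = 0"
proof (rule ccontr)
  assume "\<not> ?thesis"
  then obtain n k where nk: "n \<le> s" "k \<in> {1..2*n+1}" "a n k \<noteq> 0" by blast
  define M where "M = basis_matrix Y s N x"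
  define m where "m = (s+1)^2"
  define w where "w = Matrix.vec m (\<lambda>r. a (floor_sqrt r) (r - (floor_sqrt r)^2 + 1))"
  have M: "M \<in> carrier_mat m N" unfolding M_def m_def basis_matrix_def by simp
  have w: "w \<in> carrier_vec m" unfolding w_def by simp
  have Mt: "transpose_mat M *\<^sub>v w = 0\<^sub>v N"
  proof (rule eq_vecI)
    show "dim_vec (transpose_mat M *\<^sub>v w) = dim_vec (0\<^sub>v N)" using M by simp
    fix i assume "i < dim_vec (0\<^sub>v N)"
    then have i: "i < N" by simp
    have "vec_index (transpose_mat M *\<^sub>v w) i = scalar_prod (col M i) w" using M i by simp
    also have "\<dots> = (\<Sum>r<m. Y (floor_sqrt r) (r - (floor_sqrt r)^2 + 1) (x i) * a (floor_sqrt r) (r - (floor_sqrt r)^2 + 1))"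
      unfolding scalar_prod_def using M i w
      by (intro sum.cong) (auto simp: w_def M_def basis_matrix_def m_def)
    also have "\<dots> = (\<Sum>n\<le>s. \<Sum>k\<in>{1..2*n+1}. Y n k (x i) * a n k)"
      unfolding m_def by (rule reindex_rows[of "\<lambda>n k. Y n k (x i) * a n k"])
    also have "\<dots> = 0" using z i by (simp add: mult.commute)
    finally show "vec_index (transpose_mat M *\<^sub>v w) i = vec_index (0\<^sub>v N) i" using i by simp
  qed
  have MM: "(M * transpose_mat M) *\<^sub>v w = 0 \<cdot>\<^sub>v w"
  proof -
    have "(M * transpose_mat M) *\<^sub>v w = M *\<^sub>v (transpose_mat M *\<^sub>v w)"
      using M w by (intro assoc_mult_mat_vec) auto
    also have "\<dots> = 0\<^sub>v m" unfolding Mt using M by (intro eq_vecI) auto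
    also have "\<dots> = 0 \<cdot>\<^sub>v w" using w by (intro eq_vecI) auto
    finally show ?thesis .
  qed
  have r: "n^2 + k - 1 < m"
  proof -
    have "(n+1)^2 \<le> (s+1)^2" using nk by (intro power_mono) auto
    moreover have "n^2 + k - 1 < (n+1)^2" using nk by (auto simp: power2_eq_square)
    ultimately show ?thesis unfolding m_def by linarith
  qed
  have "vec_index w (n^2 + k - 1) = a n k" unfolding w_def using r fs_idx[of k n] nk by simp
  then have "w \<noteq> 0\<^sub>v m" using nk r by auto
  then have "eigenvector (M * transpose_mat M) w 0"
    unfolding eigenvector_def using M w MM by auto
  then have "eigenvalue (M * transpose_mat M) (0^2)" unfolding eigenvalue_def by auto
  then have "singular_value M 0" unfolding singular_value_def by simp
  then show False using sv unfolding M_def by auto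
qed




lemma norm_pt3: "norm (x::pt3) = sqrt (fst x^2 + fst (snd x)^2 + snd (snd x)^2)"
  unfolding norm_prod_def by (simp add: add.assoc)

lemma norm1_iff: "norm (x::pt3) = 1 \<longleftrightarrow> fst x^2 + fst (snd x)^2 + snd (snd x)^2 = 1"
  unfolding norm_pt3 by simp

lemma sph_norm: "norm (sph \<theta> \<phi>) = 1"
proof -
  have e: "(sin \<phi>)^2 = 1 - (cos \<phi>)^2" "(sin \<theta>)^2 = 1 - (cos \<theta>)^2"
    by (simp_all add: sin_squared_eq)
  show ?thesis unfolding norm1_iff sph_def by (simp add: power_mult_distrib e algebra_simps)
qed

lemma si_cong: "(\<And>x. norm x = 1 \<Longrightarrow> f x = g x) \<Longrightarrow> sphere_integral f = sphere_integral g"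
  unfolding sphere_integral_def by (simp add: sph_norm split_beta)

lemma cont_tri: "continuous_on UNIV (tri D c)"
  unfolding tri_def by (intro continuous_intros)

lemma sph_integrable:
  assumes "continuous_on UNIV f"
  shows "(\<lambda>(\<theta>, \<phi>). f (sph \<theta> \<phi>) * sin \<theta>) integrable_on cbox (0, 0) (pi, 2 * pi)"
proof (rule integrable_continuous)
  have c: "continuous_on UNIV (\<lambda>z::real\<times>real. sph (fst z) (snd z))"
    unfolding sph_def by (intro continuous_intros)
  have cf: "continuous_on UNIV (\<lambda>z::real\<times>real. f (sph (fst z) (snd z)) * sin (fst z))"
    by (intro continuous_intros continuous_on_compose2[OF assms c]) auto
  then show "continuous_on (cbox (0, 0) (pi, 2 * pi)) (\<lambda>(\<theta>, \<phi>). f (sph \<theta> \<phi>) * sin \<theta>)"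
  proof -
    have "(\<lambda>(\<theta>, \<phi>). f (sph \<theta> \<phi>) * sin \<theta>) = (\<lambda>z::real\<times>real. f (sph (fst z) (snd z)) * sin (fst z))"
      by auto
    then show ?thesis using continuous_on_subset[OF cf subset_UNIV] by simp
  qed
qed

lemma si_sum:
  assumes "finite S" "\<And>s. s \<in> S \<Longrightarrow> continuous_on UNIV (f s)"
  shows "sphere_integral (\<lambda>x. \<Sum>s\<in>S. w s * f s x) = (\<Sum>s\<in>S. w s * sphere_integral (f s))"
proof -
  have "sphere_integral (\<lambda>x. \<Sum>s\<in>S. w s * f s x) =
     integral (cbox (0, 0) (pi, 2 * pi)) (\<lambda>z. \<Sum>s\<in>S. w s *\<^sub>R ((\<lambda>(\<theta>, \<phi>). f s (sph \<theta> \<phi>) * sin \<theta>) z))"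
    unfolding sphere_integral_def
    by (intro arg_cong[where f="integral (cbox (0, 0) (pi, 2 * pi))"] ext) (simp add: split_beta sum_distrib_left sum_distrib_right algebra_simps)
  also have "\<dots> = (\<Sum>s\<in>S. integral (cbox (0, 0) (pi, 2 * pi)) (\<lambda>z. w s *\<^sub>R ((\<lambda>(\<theta>, \<phi>). f s (sph \<theta> \<phi>) * sin \<theta>) z)))"
    using assms by (intro integral_sum integrable_cmul sph_integrable) auto
  also have "\<dots> = (\<Sum>s\<in>S. w s * sphere_integral (f s))"
    unfolding sphere_integral_def integral_cmul by simp
  finally show ?thesis .
qed

lemma si_scale: "sphere_integral (\<lambda>x. w * f x) = w * sphere_integral f"
proof -
  have "sphere_integral (\<lambda>x. w * f x) = integral (cbox (0, 0) (pi, 2 * pi)) (\<lambda>z. w *\<^sub>R ((\<lambda>(\<theta>, \<phi>). f (sph \<theta> \<phi>) * sin \<theta>) z))"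
    unfolding sphere_integral_def
    by (intro arg_cong[where f="integral (cbox (0, 0) (pi, 2 * pi))"] ext) (simp add: split_beta algebra_simps)
  also have "\<dots> = w * sphere_integral f" unfolding integral_cmul sphere_integral_def by simp
  finally show ?thesis .
qed




lemma choice2: "(\<And>n k. \<exists>c. Q n k c) \<Longrightarrow> \<exists>f. \<forall>n k. Q n k (f n k)"
  by metis

lemma dtri_lin: "dtri D c x (r *\<^sub>R h) = r * dtri D c x h"
  unfolding dtri_def by (simp add: algebra_simps)

lemma inner_pt3: "inner (h::pt3) u = fst h * fst u + fst (snd h) * fst (snd u) + snd (snd h) * snd (snd u)"
  unfolding inner_prod_def by simp

lemma pp_tri: "\<forall>a b e. d < a+b+e \<longrightarrow> c a b e = 0 \<Longrightarrow> pp d D (tri D c)"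
  unfolding pp_def by blast

lemma si_sum2:
  assumes "finite S" "\<And>s. s \<in> S \<Longrightarrow> finite (T s)"
    "\<And>s r. s \<in> S \<Longrightarrow> r \<in> T s \<Longrightarrow> continuous_on UNIV (f s r)"
  shows "sphere_integral (\<lambda>x. \<Sum>s\<in>S. \<Sum>r\<in>T s. w s r * f s r x) = (\<Sum>s\<in>S. \<Sum>r\<in>T s. w s r * sphere_integral (f s r))"
proof -
  have "sphere_integral (\<lambda>x. \<Sum>s\<in>S. \<Sum>r\<in>T s. w s r * f s r x) =
     sphere_integral (\<lambda>x. \<Sum>s\<in>S. 1 * (\<lambda>s x. \<Sum>r\<in>T s. w s r * f s r x) s x)" by simp
  also have "\<dots> = (\<Sum>s\<in>S. 1 * sphere_integral (\<lambda>x. \<Sum>r\<in>T s. w s r * f s r x))"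
    using assms by (intro si_sum) (auto intro!: continuous_on_sum continuous_on_mult_left)
  also have "\<dots> = (\<Sum>s\<in>S. \<Sum>r\<in>T s. w s r * sphere_integral (f s r))"
    using assms by (intro sum.cong refl) (simp add: si_sum)
  finally show ?thesis .
qed

theorem theorem2:
  fixes t N :: nat and x :: "nat \<Rightarrow> real \<times> real \<times> real"
    and Y :: "nat \<Rightarrow> nat \<Rightarrow> real \<times> real \<times> real \<Rightarrow> real"
  assumes "t \<ge> 2" and "N \<ge> (t + 2)^2"
    and "sph_harm_basis (t + 1) Y"
    and "\<forall>i<N. norm (x i) = 1" and "inj_on x {..<N}"
    and "stationary_A Y N t x"
    and "\<forall>\<sigma>. singular_value (basis_matrix Y (t + 1) N x) \<sigma> \<longrightarrow> \<sigma> > 0"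
  shows "spherical_design t N x"
proof -
  note hb = assms(3)[unfolded sph_harm_basis_def]
  have hpoly: "\<forall>n\<le>t+1. \<forall>k\<in>{1..2*n+1}. poly3 n (Y n k)" using hb by blast
  have horth: "\<forall>n\<le>t+1. \<forall>k\<in>{1..2*n+1}. \<forall>n'\<le>t+1. \<forall>k'\<in>{1..2*n'+1}.
        sphere_integral (\<lambda>x. Y n k x * Y n' k' x) = (if n = n' \<and> k = k' then 1 else 0)" using hb by blast
  have hY0: "\<forall>x. Y 0 1 x = 1 / sqrt (4 * pi)" using hb by blast
  have hbasis: "\<forall>m\<le>t+1. \<forall>p. poly3 m p \<longrightarrow> (\<exists>a :: nat \<Rightarrow> nat \<Rightarrow> real. \<forall>x. norm x = 1 \<longrightarrow>
        p x = (\<Sum>n\<le>m. \<Sum>k\<in>{1..2*n+1}. a n k * Y n k x))" using hb by blast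
  have x1: "\<And>i. i < N \<Longrightarrow> norm (x i) = 1" using assms(4) by blast
  have Npos: "N > 0"
  proof -
    have "(t+2)^2 > (0::nat)" by simp
    then show ?thesis using assms(2) by linarith
  qed
  define D where "D = t + 1"
  have "\<exists>f. \<forall>n k. n \<le> t+1 \<and> k \<in> {1..2*n+1} \<longrightarrow>
     (\<forall>a b e. n < a+b+e \<longrightarrow> f n k a b e = 0) \<and> (\<forall>x. Y n k x = tri D (f n k) x)"
  proof (rule choice2)
    fix n k
    show "\<exists>c. n \<le> t+1 \<and> k \<in> {1..2*n+1} \<longrightarrow>
     (\<forall>a b e. n < a+b+e \<longrightarrow> c a b e = 0) \<and> (\<forall>x. Y n k x = tri D c x)"
    proof (cases "n \<le> t+1 \<and> k \<in> {1..2*n+1}")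
      case True
      then have "pp n D (Y n k)" using hpoly poly3_pp[of n D] unfolding D_def by blast
      then show ?thesis unfolding pp_def by blast
    qed auto
  qed
  then obtain cY where cY: "\<forall>n k. n \<le> t+1 \<and> k \<in> {1..2*n+1} \<longrightarrow>
     (\<forall>a b e. n < a+b+e \<longrightarrow> cY n k a b e = 0) \<and> (\<forall>x. Y n k x = tri D (cY n k) x)"
    by (elim exE)
  have cYv: "\<forall>a b e. n < a+b+e \<longrightarrow> cY n k a b e = 0" if "n \<le> t+1" "k \<in> {1..2*n+1}" for n k
    using cY that by blast
  have cYe: "Y n k = tri D (cY n k)" if "n \<le> t+1" "k \<in> {1..2*n+1}" for n k
  proof
    fix z show "Y n k z = tri D (cY n k) z" using cY that by blast
  qed
  have Ycont: "\<And>n k. n \<le> t+1 \<Longrightarrow> k \<in> {1..2*n+1} \<Longrightarrow> continuous_on UNIV (Y n k)"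
    using cYe cont_tri by simp
  have Yder: "(Y n k has_derivative dtri D (cY n k) z) (at z)" if "n \<le> t+1" "k \<in> {1..2*n+1}" for n k z
  proof -
    have "(tri D (cY n k) has_derivative dtri D (cY n k) z) (at z)"
      by (rule tri_deriv[OF cYv[OF that]]) (use that in \<open>simp add: D_def\<close>)
    then show ?thesis using cYe[OF that] by simp
  qed
  define R where "R n k = (\<Sum>i<N. Y n k (x i))" for n k
  define Dg where "Dg z h = (\<Sum>n\<in>{1..t}. \<Sum>k\<in>{1..2*n+1}. R n k * dtri D (cY n k) z h)" for z h
  define g where "g z = (\<Sum>n\<in>{1..t}. \<Sum>k\<in>{1..2*n+1}. R n k * Y n k z)" for z
  have Dg_lin: "Dg z (r *\<^sub>R h) = r * Dg z h" for z r h
    unfolding Dg_def dtri_lin by (simp add: sum_distrib_left algebra_simps)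

  have stepA: "Dg (x i) u = 0" if i: "i < N" and u: "norm u = 1" "inner u (x i) = 0" for i u
  proof -
    define \<gamma> where "\<gamma> s = cos s *\<^sub>R x i + sin s *\<^sub>R u" for s
    have xx: "inner (x i) (x i) = 1" using x1[OF i] by (simp add: power2_norm_eq_inner[symmetric])
    have uu: "inner u u = 1" using u by (simp add: power2_norm_eq_inner[symmetric])
    have gn: "norm (\<gamma> s) = 1" for s
    proof -
      have "inner (\<gamma> s) (\<gamma> s) = (cos s)^2 * inner (x i) (x i) + 2 * (sin s * cos s) * inner u (x i) + (sin s)^2 * inner u u"
        unfolding \<gamma>_def by (simp add: inner_add_left inner_add_right inner_commute power2_eq_square algebra_simps)
      also have "\<dots> = 1" using xx uu u by simp
      finally show ?thesis by (simp add: norm_eq_sqrt_inner)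
    qed
    have g0: "\<gamma> 0 = x i" unfolding \<gamma>_def by simp
    have gd: "(\<gamma> has_derivative (\<lambda>h. h *\<^sub>R u)) (at 0)"
      unfolding \<gamma>_def by (rule has_derivative_eq_rhs, (rule derivative_intros)+) auto
    then have gdiff: "\<gamma> differentiable (at 0)" unfolding differentiable_def by blast
    define K where "K = 4 * pi / (real N)^2"
    define C where "C n k = R n k - Y n k (x i)" for n k
    have sumsplit: "(\<Sum>j<N. Y n k ((x(i := v)) j)) = Y n k v + C n k" for n k v
    proof -
      have "(\<Sum>j<N. Y n k ((x(i := v)) j)) = Y n k v + (\<Sum>j\<in>{..<N}-{i}. Y n k ((x(i := v)) j))"
        using i by (subst sum.remove[of _ i]) auto
      also have "(\<Sum>j\<in>{..<N}-{i}. Y n k ((x(i := v)) j)) = (\<Sum>j\<in>{..<N}-{i}. Y n k (x j))"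
        by (intro sum.cong) auto
      also have "\<dots> = C n k" unfolding C_def R_def using i by (subst sum.remove[of _ i]) auto
      finally show ?thesis .
    qed
    have F: "A_Nt Y N t (x(i := \<gamma> s)) = K * (\<Sum>n\<in>{1..t}. \<Sum>k\<in>{1..2*n+1}. (Y n k (\<gamma> s) + C n k)^2)" for s
      unfolding A_Nt_def K_def sumsplit ..
    have dq: "((\<lambda>s. Y n k (\<gamma> s)) has_field_derivative dtri D (cY n k) (x i) u) (at 0)"
      if "n \<le> t+1" "k \<in> {1..2*n+1}" for n k
    proof -
      have "((\<lambda>s. Y n k (\<gamma> s)) has_derivative (\<lambda>h. dtri D (cY n k) (x i) (h *\<^sub>R u))) (at 0)"
        using has_derivative_compose[OF gd, of "Y n k"] Yder[OF that, of "\<gamma> 0"] g0 by (simp add: o_def)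
      then show ?thesis unfolding has_field_derivative_def dtri_lin
        by (rule has_derivative_eq_rhs) (simp add: fun_eq_iff mult.commute)
    qed
    have dF: "((\<lambda>s. A_Nt Y N t (x(i := \<gamma> s))) has_field_derivative
        K * (\<Sum>n\<in>{1..t}. \<Sum>k\<in>{1..2*n+1}. 2 * R n k * dtri D (cY n k) (x i) u)) (at 0)"
      unfolding F
    proof (intro DERIV_cmult DERIV_sum)
      fix n k assume nk: "n \<in> {1..t}" "k \<in> {1..2*n+1}"
      have "((\<lambda>s. (Y n k (\<gamma> s) + C n k)^2) has_field_derivative
          of_nat 2 * ((dtri D (cY n k) (x i) u + 0) * (Y n k (\<gamma> 0) + C n k)^(2 - Suc 0))) (at 0)"
        using nk by (intro DERIV_power DERIV_add dq DERIV_const) auto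
      then show "((\<lambda>s. (Y n k (\<gamma> s) + C n k)^2) has_field_derivative 2 * R n k * dtri D (cY n k) (x i) u) (at 0)"
        using g0 by (simp add: C_def mult.assoc mult.commute mult.left_commute)
    qed
    have "((\<lambda>s. A_Nt Y N t (x(i := \<gamma> s))) has_field_derivative 0) (at 0)"
      using assms(6) i gn g0 gdiff unfolding stationary_A_def by blast
    then have "K * (\<Sum>n\<in>{1..t}. \<Sum>k\<in>{1..2*n+1}. 2 * R n k * dtri D (cY n k) (x i) u) = 0"
      using DERIV_unique dF by blast
    moreover have "K \<noteq> 0" unfolding K_def using Npos by simp
    ultimately have "(\<Sum>n\<in>{1..t}. \<Sum>k\<in>{1..2*n+1}. 2 * R n k * dtri D (cY n k) (x i) u) = 0" by simp
    then have "2 * Dg (x i) u = 0" unfolding Dg_def by (simp add: sum_distrib_left algebra_simps)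
    then show ?thesis by simp
  qed

  have stepA': "Dg (x i) h = 0" if i: "i < N" and h: "inner h (x i) = 0" for i h
  proof (cases "h = 0")
    case True then show ?thesis using Dg_lin[of "x i" 0 h] by simp
  next
    case False
    define u where "u = inverse (norm h) *\<^sub>R h"
    have "norm u = 1" "inner u (x i) = 0" unfolding u_def using False h by auto
    then have "Dg (x i) u = 0" using stepA i by blast
    moreover have hu: "norm h *\<^sub>R u = h" unfolding u_def using False by simp
    ultimately show ?thesis using Dg_lin[of "x i" "norm h" u] by (simp only: hu)
  qed
  define Gf where "Gf j z = (\<Sum>n\<in>{1..t}. \<Sum>k\<in>{1..2*n+1}. R n k * tri D ((if j = (1::nat) then sh1 else if j = 2 then sh2 else sh3) (cY n k)) z)" for j z
  have Dg_eq: "Dg z h = fst h * Gf 1 z + fst (snd h) * Gf 2 z + snd (snd h) * Gf 3 z" for z h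
    unfolding Dg_def Gf_def dtri_def by (simp add: sum_distrib_left sum.distrib algebra_simps)
  define S where "S z = fst z * Gf 1 z + fst (snd z) * Gf 2 z + snd (snd z) * Gf 3 z" for z
  define P where "P j z = Gf j z - (if j = (1::nat) then fst z else if j = 2 then fst (snd z) else snd (snd z)) * S z" for j z
  have P1: "P 1 = (\<lambda>z. Gf 1 z - fst z * S z)" "P 2 = (\<lambda>z. Gf 2 z - fst (snd z) * S z)"
    "P 3 = (\<lambda>z. Gf 3 z - snd (snd z) * S z)" by (simp_all add: P_def fun_eq_iff)
  have PDg: "P 1 z = Dg z ((1,0,0) - fst z *\<^sub>R z)" "P 2 z = Dg z ((0,1,0) - fst (snd z) *\<^sub>R z)"
    "P 3 z = Dg z ((0,0,1) - snd (snd z) *\<^sub>R z)" for z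
    unfolding P1 Dg_eq S_def by (simp_all add: algebra_simps)
  have zz: "inner z z = 1" if "norm z = 1" for z :: pt3
    using that by (simp add: power2_norm_eq_inner[symmetric])
  have Pxi: "P j (x i) = 0" if "i < N" "j \<in> {1,2,3}" for i j
  proof -
    have zi: "inner (x i) (x i) = 1" using zz x1 that(1) by blast
    have o: "inner ((1,0,0) - fst (x i) *\<^sub>R x i) (x i) = 0" "inner ((0,1,0) - fst (snd (x i)) *\<^sub>R x i) (x i) = 0"
       "inner ((0,0,1) - snd (snd (x i)) *\<^sub>R x i) (x i) = 0"
    proof -
      have e: "inner (1,0,0) z = fst z" "inner (0,1,0) z = fst (snd z)" "inner (0,0,1) z = snd (snd z)" for z :: pt3
        by (simp_all add: inner_prod_def)
      show "inner ((1,0,0) - fst (x i) *\<^sub>R x i) (x i) = 0" "inner ((0,1,0) - fst (snd (x i)) *\<^sub>R x i) (x i) = 0"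
       "inner ((0,0,1) - snd (snd (x i)) *\<^sub>R x i) (x i) = 0"
        using zi by (simp_all only: inner_diff_left e inner_scaleR_left)
    qed
    have "P 1 (x i) = 0" "P 2 (x i) = 0" "P 3 (x i) = 0"
      unfolding PDg by (rule stepA'[OF that(1) o(1)], rule stepA'[OF that(1) o(2)], rule stepA'[OF that(1) o(3)])
    then show ?thesis using that(2) by auto
  qed
  have t1: "t \<ge> 1" using assms(1) by simp
  have Gpp: "pp (t-1) D (Gf j)" for j
  proof -
    have "pp (t-1) D (\<lambda>z. \<Sum>n\<in>{1..t}. 1 * (\<Sum>k\<in>{1..2*n+1}. R n k * tri D ((if j = (1::nat) then sh1 else if j = 2 then sh2 else sh3) (cY n k)) z))"
    proof (intro pp_sum)
      fix n k assume n: "n \<in> {1..t}" and k: "k \<in> {1..2*n+1}"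
      have v: "\<forall>a b e. n < a+b+e \<longrightarrow> cY n k a b e = 0" using cYv n k by simp
      have "pp (n-1) D (tri D ((if j = (1::nat) then sh1 else if j = 2 then sh2 else sh3) (cY n k)))"
        using sh_vanish[OF v] by (intro pp_tri) auto
      then show "pp (t-1) D (tri D ((if j = (1::nat) then sh1 else if j = 2 then sh2 else sh3) (cY n k)))"
        by (rule pp_mono) (use n in auto)
    qed auto
    then show ?thesis unfolding Gf_def by simp
  qed
  have Spp: "pp t D S"
  proof -
    have a: "pp t D (\<lambda>z. fst z * Gf 1 z)" "pp t D (\<lambda>z. fst (snd z) * Gf 2 z)" "pp t D (\<lambda>z. snd (snd z) * Gf 3 z)"
      using pp_mult1[OF Gpp] pp_mult2[OF Gpp] pp_mult3[OF Gpp] t1 unfolding D_def by auto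
    show ?thesis unfolding S_def[abs_def] by (intro pp_add a)
  qed
  have Ppp: "pp (t+1) D (P j)" if "j \<in> {1,2,3}" for j
  proof -
    have G: "pp (Suc t) D (Gf j)" for j by (rule pp_mono[OF Gpp]) simp
    have "pp (Suc t) D (\<lambda>z. fst z * S z)" "pp (Suc t) D (\<lambda>z. fst (snd z) * S z)" "pp (Suc t) D (\<lambda>z. snd (snd z) * S z)"
      using pp_mult1[OF Spp] pp_mult2[OF Spp] pp_mult3[OF Spp] unfolding D_def by auto
    then have "pp (t+1) D (P 1)" "pp (t+1) D (P 2)" "pp (t+1) D (P 3)"
      unfolding P1 by (auto intro!: pp_diff G)
    then show ?thesis using that by auto
  qed
  have Pzero: "P j z = 0" if j: "j \<in> {1,2,3}" and z: "norm z = 1" for j z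
  proof -
    have "poly3 (t+1) (P j)" using poly3_pp[of "t+1" D] Ppp[OF j] unfolding D_def by simp
    then obtain a where a: "\<forall>x. norm x = 1 \<longrightarrow> P j x = (\<Sum>n\<le>t+1. \<Sum>k\<in>{1..2*n+1}. a n k * Y n k x)"
      using hbasis by blast
    have "\<forall>i<N. (\<Sum>n\<le>t+1. \<Sum>k\<in>{1..2*n+1}. a n k * Y n k (x i)) = 0"
    proof (intro allI impI)
      fix i assume i: "i < N"
      have "P j (x i) = (\<Sum>n\<le>t+1. \<Sum>k\<in>{1..2*n+1}. a n k * Y n k (x i))"
        using a x1[OF i] by blast
      then show "(\<Sum>n\<le>t+1. \<Sum>k\<in>{1..2*n+1}. a n k * Y n k (x i)) = 0" using Pxi[OF i j] by simp
    qed
    then have az: "\<forall>n\<le>t+1. \<forall>k\<in>{1..2*n+1}. a n k = 0" by (rule matrix_kernel[OF assms(7)])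
    have "P j z = (\<Sum>n\<le>t+1. \<Sum>k\<in>{1..2*n+1}. a n k * Y n k z)" using a z by blast
    also have "\<dots> = 0" using az by (intro sum.neutral ballI) simp
    finally show ?thesis .
  qed
  have stepC: "Dg z h = 0" if z: "norm z = 1" and h: "inner h z = 0" for z h
  proof -
    have "Gf 1 z = fst z * S z" "Gf 2 z = fst (snd z) * S z" "Gf 3 z = snd (snd z) * S z"
      using Pzero[OF _ z, of 1] Pzero[OF _ z, of 2] Pzero[OF _ z, of 3] unfolding P1 by auto
    then have "Dg z h = inner h z * S z" unfolding Dg_eq inner_pt3 by (simp add: algebra_simps)
    then show ?thesis using h by simp
  qed
  have gder: "(g has_derivative Dg z) (at z)" for z
  proof -
    have "((\<lambda>z. \<Sum>n\<in>{1..t}. \<Sum>k\<in>{1..2*n+1}. R n k * Y n k z) has_derivative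
      (\<lambda>h. \<Sum>n\<in>{1..t}. \<Sum>k\<in>{1..2*n+1}. R n k * dtri D (cY n k) z h)) (at z)"
      by (intro has_derivative_sum has_derivative_mult_right Yder) auto
    then show ?thesis unfolding g_def[abs_def] Dg_def[abs_def] .
  qed
  have gconst: "g z = g (1,0,0)" if z: "norm z = 1" for z
  proof -
    define H where "H y = g (inverse (norm y) *\<^sub>R y)" for y :: pt3
    have Hd: "(H has_derivative (\<lambda>h. 0)) (at y)" if y: "y \<in> - {0}" for y
    proof -
      have y0: "y \<noteq> 0" using y by simp
      have nd: "(norm has_derivative (\<lambda>h. inner h (sgn y))) (at y)" using has_derivative_norm[OF y0] .
      have id: "((\<lambda>y. inverse (norm y)) has_derivative (\<lambda>h. - (inverse (norm y) * inner h (sgn y) * inverse (norm y)))) (at y)"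
        by (rule Deriv.has_derivative_inverse[OF _ nd]) (simp add: y0)
      have nu: "((\<lambda>y. inverse (norm y) *\<^sub>R y) has_derivative
          (\<lambda>h. inverse (norm y) *\<^sub>R h + (- (inverse (norm y) * inner h (sgn y) * inverse (norm y))) *\<^sub>R y)) (at y)"
        by (rule has_derivative_scaleR[OF id has_derivative_ident])
      have "((\<lambda>y. g (inverse (norm y) *\<^sub>R y)) has_derivative
          (\<lambda>h. Dg (inverse (norm y) *\<^sub>R y) (inverse (norm y) *\<^sub>R h + (- (inverse (norm y) * inner h (sgn y) * inverse (norm y))) *\<^sub>R y))) (at y)"
        using has_derivative_compose[OF nu gder] by (simp add: o_def)
      moreover have "Dg (inverse (norm y) *\<^sub>R y) (inverse (norm y) *\<^sub>R h + (- (inverse (norm y) * inner h (sgn y) * inverse (norm y))) *\<^sub>R y) = 0" for h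
      proof (rule stepC)
        show "norm (inverse (norm y) *\<^sub>R y) = 1" using y0 by simp
        have yy: "inner y y = norm y * norm y" by (simp add: power2_norm_eq_inner[symmetric] power2_eq_square)
        have sg: "inner h (sgn y) = inverse (norm y) * inner h y"
          by (simp add: sgn_div_norm divide_inverse_commute)
        have "inner (inverse (norm y) *\<^sub>R h + (- (inverse (norm y) * inner h (sgn y) * inverse (norm y))) *\<^sub>R y) (inverse (norm y) *\<^sub>R y)
          = inverse (norm y) * inverse (norm y) * inner h y * (1 - (inverse (norm y) * norm y) * (inverse (norm y) * norm y))"
          by (simp only: inner_add_left inner_scaleR_left inner_scaleR_right sg yy) (simp add: algebra_simps)
        also have "\<dots> = 0" using y0 by simp
        finally show "inner (inverse (norm y) *\<^sub>R h + (- (inverse (norm y) * inner h (sgn y) * inverse (norm y))) *\<^sub>R y) (inverse (norm y) *\<^sub>R y) = 0" .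
      qed
      ultimately show ?thesis unfolding H_def by simp
    qed
    have "H z = H (1,0,0)"
    proof (rule has_derivative_zero_unique_connected[of "- {0::pt3}" H z "(1,0,0)"])
      show "open (- {0::pt3})" by auto
      show "connected (- {0::pt3})" by (rule connected_punctured_universe) simp
    qed (use Hd z in \<open>auto simp: zero_prod_def\<close>)
    moreover have "norm ((1,0,0)::pt3) = 1" by (simp add: norm1_iff)
    ultimately show ?thesis using z unfolding H_def by simp
  qed
  have sq: "sqrt (4 * pi) * (1 / sqrt (4 * pi)) = 1" by simp
  have IY: "sphere_integral (Y n k) = sqrt (4 * pi) * (if n = 0 \<and> k = 1 then 1 else 0)"
    if "n \<le> t+1" "k \<in> {1..2*n+1}" for n k
  proof -
    have "sphere_integral (Y n k) = sphere_integral (\<lambda>z. sqrt (4 * pi) * (Y 0 1 z * Y n k z))"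
    proof -
      have "(\<lambda>z. sqrt (4 * pi) * (Y 0 1 z * Y n k z)) = Y n k"
      proof
        fix z
        have "Y 0 1 z = 1 / sqrt (4 * pi)" using hY0 by blast
        then show "sqrt (4 * pi) * (Y 0 1 z * Y n k z) = Y n k z" by simp
      qed
      then show ?thesis by simp
    qed
    also have "\<dots> = sqrt (4 * pi) * sphere_integral (\<lambda>z. Y 0 1 z * Y n k z)" by (rule si_scale)
    also have "\<dots> = sqrt (4 * pi) * (if n = 0 \<and> k = 1 then 1 else 0)"
      using horth that by fastforce
    finally show ?thesis .
  qed
  have R0: "R n k = 0" if n: "n \<in> {1..t}" and k: "k \<in> {1..2*n+1}" for n k
  proof -
    have "sphere_integral (\<lambda>z. g z * Y n k z) =
       sphere_integral (\<lambda>z. \<Sum>n'\<in>{1..t}. \<Sum>k'\<in>{1..2*n'+1}. R n' k' * (Y n' k' z * Y n k z))"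
      unfolding g_def by (simp only: sum_distrib_right mult.assoc)
    also have "\<dots> = (\<Sum>n'\<in>{1..t}. \<Sum>k'\<in>{1..2*n'+1}. R n' k' * sphere_integral (\<lambda>z. Y n' k' z * Y n k z))"
      using n k by (intro si_sum2) (auto intro!: continuous_on_mult Ycont)
    also have "\<dots> = (\<Sum>n'\<in>{1..t}. \<Sum>k'\<in>{1..2*n'+1}. R n' k' * (if n' = n \<and> k' = k then 1 else 0))"
      using n k horth by (intro sum.cong refl) auto
    also have "\<dots> = (\<Sum>n'\<in>{1..t}. if n' = n then R n k else 0)"
      using k by (intro sum.cong refl) (auto simp: if_distrib cong: if_cong)
    also have "\<dots> = R n k" using n by simp
    finally have e1: "sphere_integral (\<lambda>z. g z * Y n k z) = R n k" .
    have "sphere_integral (\<lambda>z. g z * Y n k z) = sphere_integral (\<lambda>z. g (1,0,0) * Y n k z)"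
      by (rule si_cong) (simp add: gconst)
    also have "\<dots> = g (1,0,0) * sphere_integral (Y n k)" by (rule si_scale)
    also have "\<dots> = 0" using IY[of n k] n k by simp
    finally show ?thesis using e1 by simp
  qed
  have R01: "R 0 1 = real N * (1 / sqrt (4 * pi))"
  proof -
    have "R 0 1 = (\<Sum>i<N. 1 / sqrt (4 * pi))" unfolding R_def
      by (intro sum.cong refl) (use hY0 in blast)
    then show ?thesis by simp
  qed
  have split0: "{..t} = insert 0 {1..t}" by auto
  show ?thesis unfolding spherical_design_def
  proof (intro allI impI)
    fix p assume p: "poly3 t p"
    obtain a where a: "\<forall>x. norm x = 1 \<longrightarrow> p x = (\<Sum>n\<le>t. \<Sum>k\<in>{1..2*n+1}. a n k * Y n k x)"
    proof -
      have "\<exists>a :: nat \<Rightarrow> nat \<Rightarrow> real. \<forall>x. norm x = 1 \<longrightarrow> p x = (\<Sum>n\<le>t. \<Sum>k\<in>{1..2*n+1}. a n k * Y n k x)"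
        by (rule hbasis[rule_format]) (simp_all add: p)
      then show ?thesis using that by blast
    qed
    have "(\<Sum>i<N. p (x i)) = (\<Sum>i<N. \<Sum>n\<le>t. \<Sum>k\<in>{1..2*n+1}. a n k * Y n k (x i))"
    proof (rule sum.cong[OF refl])
      fix i assume "i \<in> {..<N}"
      then have "norm (x i) = 1" using x1 by simp
      then show "p (x i) = (\<Sum>n\<le>t. \<Sum>k\<in>{1..2*n+1}. a n k * Y n k (x i))" using a by blast
    qed
    also have "\<dots> = (\<Sum>n\<le>t. \<Sum>k\<in>{1..2*n+1}. a n k * R n k)"
      unfolding R_def sum_distrib_left by (simp only: sum.swap[of _ "{..<N}"])
    also have "\<dots> = (\<Sum>k\<in>{1..2*0+1}. a 0 k * R 0 k) + (\<Sum>n\<in>{1..t}. \<Sum>k\<in>{1..2*n+1}. a n k * R n k)"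
      unfolding split0 by (subst sum.insert) auto
    also have "\<dots> = a 0 1 * R 0 1" using R0 by simp
    finally have L: "(\<Sum>i<N. p (x i)) = a 0 1 * R 0 1" .
    have "sphere_integral p = sphere_integral (\<lambda>z. \<Sum>n\<le>t. \<Sum>k\<in>{1..2*n+1}. a n k * Y n k z)"
      using a by (intro si_cong) blast
    also have "\<dots> = (\<Sum>n\<le>t. \<Sum>k\<in>{1..2*n+1}. a n k * sphere_integral (Y n k))"
      by (intro si_sum2) (auto intro!: Ycont)
    also have "\<dots> = (\<Sum>n\<le>t. \<Sum>k\<in>{1..2*n+1}. a n k * (sqrt (4 * pi) * (if n = 0 \<and> k = 1 then 1 else 0)))"
      using IY by (intro sum.cong refl) auto
    also have "\<dots> = (\<Sum>k\<in>{1..2*0+1}. a 0 k * (sqrt (4 * pi) * (if k = 1 then 1 else 0))) +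
       (\<Sum>n\<in>{1..t}. \<Sum>k\<in>{1..2*n+1}. a n k * (sqrt (4 * pi) * (if n = 0 \<and> k = 1 then 1 else 0)))"
      unfolding split0 by (subst sum.insert) auto
    also have "\<dots> = a 0 1 * sqrt (4 * pi)" by simp
    finally have Rt: "sphere_integral p = a 0 1 * sqrt (4 * pi)" .
    have s4: "sqrt (4 * pi) * sqrt (4 * pi) = 4 * pi" by simp
    show "1 / real N * (\<Sum>i<N. p (x i)) = 1 / (4 * pi) * sphere_integral p"
      unfolding L Rt R01 using Npos s4 by (simp add: field_simps)
  qed
qed


end
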